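(* Let $\phi$ be a smooth function on an open subset of the $x$-$y$ plane such that $X(x,y)=(x,y,\phi(x,y))$ is a timelike minimal surface in $\mathbb{L}^3$ without singularities. Then, locally (near each point), $X$ can be written as a graph of the form $(x,\psi(x,z),z)$ or of the form $(\psi(y,z),y,z)$, where $\psi$ is a Born-Infeld soliton (in the variables $(x,z)$, respectively $(y,z)$).
   Context: $\mathbb{L}^3$ denotes $\mathbb{R}^3$ with the Lorentzian metric $ds^2=dx^2+dy^2-dz^2$. A surface is timelike if its induced metric is Lorentzian (equivalently, its unit normal is spacelike), and minimal if its mean curvature vanishes; "without singularities" means the map is an immersion whose induced metric is nondegenerate (timelike) everywhere. A function $\psi$ defined on an open set $\Omega$ of the $(u,v)$-plane is a Born-Infeld soliton (in the variables $u,v$) if it satisfies the Born-Infeld equation $(1-\psi_v^2)\psi_{uu}+2\psi_u\psi_v\psi_{uv}-(1+\psi_u^2)\psi_{vv}=0$. *)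

theory Defs
  imports "HOL-Analysis.Analysis"
begin

definition lip :: "real \<times> real \<times> real \<Rightarrow> real \<times> real \<times> real \<Rightarrow> real" where
  "lip a b = fst a * fst b + fst (snd a) * fst (snd b) - snd (snd a) * snd (snd b)"

text \<open>Lorentzian cross product: lip (lcross a b) w = det(a,b,w); it is normal to a and b.\<close>
definition lcross :: "real \<times> real \<times> real \<Rightarrow> real \<times> real \<times> real \<Rightarrow> real \<times> real \<times> real" where
  "lcross a b =
     (fst (snd a) * snd (snd b) - snd (snd a) * fst (snd b),
      snd (snd a) * fst b - fst a * snd (snd b),
      - (fst a * fst (snd b) - fst (snd a) * fst b))"

definition pd1 :: "(real \<times> real \<Rightarrow> 'a::real_normed_vector) \<Rightarrow> real \<times> real \<Rightarrow> 'a" where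
  "pd1 f p = vector_derivative (\<lambda>t. f (t, snd p)) (at (fst p))"

definition pd2 :: "(real \<times> real \<Rightarrow> 'a::real_normed_vector) \<Rightarrow> real \<times> real \<Rightarrow> 'a" where
  "pd2 f p = vector_derivative (\<lambda>t. f (fst p, t)) (at (snd p))"

fun pd_iter :: "bool list \<Rightarrow> (real \<times> real \<Rightarrow> real) \<Rightarrow> real \<times> real \<Rightarrow> real" where
  "pd_iter [] f = f"
| "pd_iter (b # bs) f = (if b then pd1 else pd2) (pd_iter bs f)"

text \<open>Smooth (C-infinity) on an open set: every iterated partial derivative exists and is
  (Frechet) differentiable, hence continuous, on the set.\<close>
definition smooth_on :: "(real \<times> real) set \<Rightarrow> (real \<times> real \<Rightarrow> real) \<Rightarrow> bool" where
  "smooth_on \<Omega> f \<longleftrightarrow> (\<forall>bs. pd_iter bs f differentiable_on \<Omega>)"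

definition fundE where "fundE X p = lip (pd1 X p) (pd1 X p)"
definition fundF where "fundF X p = lip (pd1 X p) (pd2 X p)"
definition fundG where "fundG X p = lip (pd2 X p) (pd2 X p)"

definition unit_normal :: "(real \<times> real \<Rightarrow> real \<times> real \<times> real) \<Rightarrow> real \<times> real \<Rightarrow> real \<times> real \<times> real" where
  "unit_normal X p = (let n = lcross (pd1 X p) (pd2 X p) in (1 / sqrt \<bar>lip n n\<bar>) *\<^sub>R n)"

definition fundL where "fundL X p = lip (pd1 (pd1 X) p) (unit_normal X p)"
definition fundM where "fundM X p = lip (pd2 (pd1 X) p) (unit_normal X p)"
definition fundN where "fundN X p = lip (pd2 (pd2 X) p) (unit_normal X p)"

definition mean_curvature :: "(real \<times> real \<Rightarrow> real \<times> real \<times> real) \<Rightarrow> real \<times> real \<Rightarrow> real" where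
  "mean_curvature X p =
     (fundE X p * fundN X p - 2 * fundF X p * fundM X p + fundG X p * fundL X p)
     / (2 * (fundE X p * fundG X p - (fundF X p)\<^sup>2))"

text \<open>Timelike without singularities: the induced metric is Lorentzian (negative
  determinant) at every point, in particular nondegenerate.\<close>
definition timelike_on :: "(real \<times> real) set \<Rightarrow> (real \<times> real \<Rightarrow> real \<times> real \<times> real) \<Rightarrow> bool" where
  "timelike_on \<Omega> X \<longleftrightarrow> (\<forall>p\<in>\<Omega>. fundE X p * fundG X p - (fundF X p)\<^sup>2 < 0)"

definition minimal_on :: "(real \<times> real) set \<Rightarrow> (real \<times> real \<Rightarrow> real \<times> real \<times> real) \<Rightarrow> bool" where
  "minimal_on \<Omega> X \<longleftrightarrow> (\<forall>p\<in>\<Omega>. mean_curvature X p = 0)"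

definition born_infeld_on :: "(real \<times> real) set \<Rightarrow> (real \<times> real \<Rightarrow> real) \<Rightarrow> bool" where
  "born_infeld_on \<Omega> \<psi> \<longleftrightarrow> (\<forall>p\<in>\<Omega>.
     (1 - (pd2 \<psi> p)\<^sup>2) * pd1 (pd1 \<psi>) p + 2 * pd1 \<psi> p * pd2 \<psi> p * pd2 (pd1 \<psi>) p
     - (1 + (pd1 \<psi> p)\<^sup>2) * pd2 (pd2 \<psi>) p = 0)"

end

theory Submission
  imports Defs "HOL-Homology.Invariance_of_Domain"
begin

lemma pd_hd:
  fixes f :: "real \<times> real \<Rightarrow> 'a::real_normed_vector"
  assumes "(f has_derivative D) (at q)"
  shows "pd1 f q = D (1,0)" "pd2 f q = D (0,1)"
proof -
  have L: "linear D" using assms has_derivative_linear by blast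
  have "((\<lambda>t. f (t, snd q)) has_vector_derivative D (1,0)) (at (fst q))"
  proof -
    have "((\<lambda>t. (t, snd q)) has_derivative (\<lambda>t. (t, 0))) (at (fst q))"
      by (auto intro!: derivative_eq_intros)
    moreover have "(f has_derivative D) (at (fst q, snd q))" using assms by simp
    ultimately have "((\<lambda>t. f (t, snd q)) has_derivative (\<lambda>t. D (t,0))) (at (fst q))"
      by (rule has_derivative_compose[where f="\<lambda>t. (t, snd q)", simplified])
    moreover have "(\<lambda>t. D (t,0)) = (\<lambda>t. t *\<^sub>R D (1,0))"
    proof
      fix t :: real
      have "D (t,0) = D (t *\<^sub>R (1,0))" by simp
      also have "\<dots> = t *\<^sub>R D (1,0)" by (rule linear_scale[OF L])
      finally show "D (t,0) = t *\<^sub>R D (1,0)" .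
    qed
    ultimately show ?thesis unfolding has_vector_derivative_def by simp
  qed
  then show "pd1 f q = D (1,0)" unfolding pd1_def using vector_derivative_at by blast
  have "((\<lambda>t. f (fst q, t)) has_vector_derivative D (0,1)) (at (snd q))"
  proof -
    have "((\<lambda>t. (fst q, t)) has_derivative (\<lambda>t. (0, t))) (at (snd q))"
      by (auto intro!: derivative_eq_intros)
    moreover have "(f has_derivative D) (at (fst q, snd q))" using assms by simp
    ultimately have "((\<lambda>t. f (fst q, t)) has_derivative (\<lambda>t. D (0,t))) (at (snd q))"
      by (rule has_derivative_compose[where f="\<lambda>t. (fst q, t)", simplified])
    moreover have "(\<lambda>t. D (0,t)) = (\<lambda>t. t *\<^sub>R D (0,1))"
    proof
      fix t :: real
      have "D (0,t) = D (t *\<^sub>R (0,1))" by simp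
      also have "\<dots> = t *\<^sub>R D (0,1)" by (rule linear_scale[OF L])
      finally show "D (0,t) = t *\<^sub>R D (0,1)" .
    qed
    ultimately show ?thesis unfolding has_vector_derivative_def by simp
  qed
  then show "pd2 f q = D (0,1)" unfolding pd2_def using vector_derivative_at by blast
qed

lemma has_derivative_pd:
  fixes f :: "real \<times> real \<Rightarrow> 'a::real_normed_vector"
  assumes "f differentiable (at q)"
  shows "(f has_derivative (\<lambda>h. fst h *\<^sub>R pd1 f q + snd h *\<^sub>R pd2 f q)) (at q)"
proof -
  obtain D where D: "(f has_derivative D) (at q)" using assms differentiable_def by blast
  have L: "linear D" using D has_derivative_linear by blast
  have "D = (\<lambda>h. fst h *\<^sub>R D (1,0) + snd h *\<^sub>R D (0,1))"
  proof
    fix h :: "real \<times> real"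
    have "h = fst h *\<^sub>R (1,0) + snd h *\<^sub>R (0,1)" by (cases h) auto
    then have "D h = D (fst h *\<^sub>R (1,0) + snd h *\<^sub>R (0,1))" by simp
    also have "\<dots> = fst h *\<^sub>R D (1,0) + snd h *\<^sub>R D (0,1)"
      unfolding linear_add[OF L] linear_scale[OF L] ..
    finally show "D h = fst h *\<^sub>R D (1,0) + snd h *\<^sub>R D (0,1)" .
  qed
  with D pd_hd[OF D] show ?thesis by simp
qed

lemma has_derivative_pd_real:
  fixes f :: "real \<times> real \<Rightarrow> real"
  assumes "f differentiable (at q)"
  shows "(f has_derivative (\<lambda>h. fst h * pd1 f q + snd h * pd2 f q)) (at q)"
  using has_derivative_pd[OF assms] by simp

lemma vd_cong:
  fixes f g :: "real \<Rightarrow> 'a::real_normed_vector"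
  assumes "open V" "t0 \<in> V" "\<And>t. t \<in> V \<Longrightarrow> f t = g t"
  shows "vector_derivative f (at t0) = vector_derivative g (at t0)"
proof -
  have "\<And>D. (f has_vector_derivative D) (at t0) \<longleftrightarrow> (g has_vector_derivative D) (at t0)"
  proof
    fix D assume "(f has_vector_derivative D) (at t0)"
    then show "(g has_vector_derivative D) (at t0)" unfolding has_vector_derivative_def
      using has_derivative_transform_within_open[OF _ assms(1,2)] assms(3) by blast
  next
    fix D assume "(g has_vector_derivative D) (at t0)"
    then show "(f has_vector_derivative D) (at t0)" unfolding has_vector_derivative_def
      using has_derivative_transform_within_open[OF _ assms(1,2)] assms(3) by metis
  qed
  then show ?thesis unfolding vector_derivative_def by simp
qed

lemma pd1_cong:
  assumes "open S" "q \<in> S" "\<And>x. x \<in> S \<Longrightarrow> f x = g x"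
  shows "pd1 f q = pd1 g q"
proof -
  have op: "open ((\<lambda>t. (t, snd q)) -` S)"
    by (rule continuous_open_vimage[OF assms(1)]) (auto intro!: continuous_intros)
  have mem: "fst q \<in> (\<lambda>t. (t, snd q)) -` S" using assms(2) by simp
  show ?thesis unfolding pd1_def by (rule vd_cong[OF op mem]) (simp add: assms(3))
qed

lemma pd2_cong:
  assumes "open S" "q \<in> S" "\<And>x. x \<in> S \<Longrightarrow> f x = g x"
  shows "pd2 f q = pd2 g q"
proof -
  have op: "open ((\<lambda>t. (fst q, t)) -` S)"
    by (rule continuous_open_vimage[OF assms(1)]) (auto intro!: continuous_intros)
  have mem: "snd q \<in> (\<lambda>t. (fst q, t)) -` S" using assms(2) by simp
  show ?thesis unfolding pd2_def by (rule vd_cong[OF op mem]) (simp add: assms(3))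
qed

lemma pd_iter_snoc: "pd_iter (bs @ [c]) f = pd_iter bs ((if c then pd1 else pd2) f)"
  by (induction bs) auto

lemma pd_iter_cong:
  assumes "open S" "\<And>x. x \<in> S \<Longrightarrow> f x = g x"
  shows "q \<in> S \<Longrightarrow> pd_iter bs f q = pd_iter bs g q"
proof (induction bs arbitrary: q)
  case Nil then show ?case using assms by simp
next
  case (Cons c bs)
  then show ?case using pd1_cong[OF assms(1) Cons.prems, of "pd_iter bs f" "pd_iter bs g"]
      pd2_cong[OF assms(1) Cons.prems, of "pd_iter bs f" "pd_iter bs g"]
    by auto
qed

lemma differentiable_on_cong_open:
  assumes "open S" "\<And>x. x \<in> S \<Longrightarrow> f x = g x" "g differentiable_on S"
  shows "f differentiable_on S"
proof -
  have "\<forall>x\<in>S. g differentiable at x" using assms differentiable_on_eq_differentiable_at by blast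
  then have "\<forall>x\<in>S. f differentiable at x"
    unfolding differentiable_def
    using has_derivative_transform_within_open[OF _ assms(1)] assms(2) by metis
  then show ?thesis using assms(1) differentiable_on_eq_differentiable_at by blast
qed

definition sm :: "(real \<times> real) set \<Rightarrow> nat \<Rightarrow> (real \<times> real \<Rightarrow> real) \<Rightarrow> bool" where
  "sm S n f \<longleftrightarrow> (\<forall>bs. length bs \<le> n \<longrightarrow> pd_iter bs f differentiable_on S)"

lemma smooth_on_sm: "smooth_on S f \<longleftrightarrow> (\<forall>n. sm S n f)"
  unfolding smooth_on_def sm_def by auto

lemma sm_0: "sm S 0 f \<longleftrightarrow> f differentiable_on S"
  unfolding sm_def by auto

lemma sm_mono:
  assumes "sm S n f" "m \<le> n" shows "sm S m f"
  unfolding sm_def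
proof (intro allI impI)
  fix bs :: "bool list" assume "length bs \<le> m"
  then have "length bs \<le> n" using assms(2) by simp
  then show "pd_iter bs f differentiable_on S" using assms(1) unfolding sm_def by blast
qed

lemma sm_Suc: "sm S (Suc n) f \<longleftrightarrow> f differentiable_on S \<and> sm S n (pd1 f) \<and> sm S n (pd2 f)"
proof
  assume H: "sm S (Suc n) f"
  have "f differentiable_on S" using sm_mono[OF H, of 0] sm_0 by simp
  moreover have "sm S n (pd1 f)" unfolding sm_def
  proof (intro allI impI)
    fix bs :: "bool list" assume "length bs \<le> n"
    show "pd_iter bs (pd1 f) differentiable_on S"
    proof -
      from \<open>length bs \<le> n\<close> have "length (bs @ [True]) \<le> Suc n" by simp
      then have "pd_iter (bs @ [True]) f differentiable_on S" using H unfolding sm_def by blast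
      then show ?thesis by (simp add: pd_iter_snoc)
    qed
  qed
  moreover have "sm S n (pd2 f)" unfolding sm_def
  proof (intro allI impI)
    fix bs :: "bool list" assume "length bs \<le> n"
    show "pd_iter bs (pd2 f) differentiable_on S"
    proof -
      from \<open>length bs \<le> n\<close> have "length (bs @ [False]) \<le> Suc n" by simp
      then have "pd_iter (bs @ [False]) f differentiable_on S" using H unfolding sm_def by blast
      then show ?thesis by (simp add: pd_iter_snoc)
    qed
  qed
  ultimately show "f differentiable_on S \<and> sm S n (pd1 f) \<and> sm S n (pd2 f)" by blast
next
  assume H: "f differentiable_on S \<and> sm S n (pd1 f) \<and> sm S n (pd2 f)"
  show "sm S (Suc n) f" unfolding sm_def
  proof (intro allI impI)
    fix bs :: "bool list" assume L: "length bs \<le> Suc n"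
    show "pd_iter bs f differentiable_on S"
    proof (cases bs rule: rev_cases)
      case Nil then show ?thesis using H by simp
    next
      case (snoc bs' c)
      then have "length bs' \<le> n" using L by simp
      then have l: "length bs' \<le> n" using L by simp
      have h1: "pd_iter bs' (pd1 f) differentiable_on S" using H l unfolding sm_def by blast
      have h2: "pd_iter bs' (pd2 f) differentiable_on S" using H l unfolding sm_def by blast
      show ?thesis unfolding snoc pd_iter_snoc using h1 h2 by (cases c) simp_all
    qed
  qed
qed


lemma sm_cong:
  assumes "open S" "\<And>x. x \<in> S \<Longrightarrow> f x = g x" "sm S n g"
  shows "sm S n f"
  unfolding sm_def
proof (intro allI impI)
  fix bs :: "bool list" assume "length bs \<le> n"
  then have hg: "pd_iter bs g differentiable_on S" using assms(3) unfolding sm_def by blast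
  show "pd_iter bs f differentiable_on S"
    by (rule differentiable_on_cong_open[OF assms(1) pd_iter_cong[OF assms(1,2)] hg])
qed

lemma diff_at: "open S \<Longrightarrow> f differentiable_on S \<Longrightarrow> x \<in> S \<Longrightarrow> f differentiable at x"
  by (meson differentiable_on_eq_differentiable_at)

lemma sm_diff_at: assumes "open S" "sm S n f" "x \<in> S" shows "f differentiable at x"
  using diff_at[OF assms(1) sm_mono[OF assms(2) le0, unfolded sm_0] assms(3)] .

lemma pd_const: "pd1 (\<lambda>_. c) q = 0" "pd2 (\<lambda>_. c) q = 0"
  using pd_hd[of "\<lambda>_. c" "\<lambda>_. 0" q] by auto

lemma sm_const: "sm S n (\<lambda>_. c)"
proof (induction n arbitrary: c)
  case 0 then show ?case by (simp add: sm_0)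
next
  case (Suc n)
  have "pd1 (\<lambda>_. c) = (\<lambda>_. 0)" "pd2 (\<lambda>_. c) = (\<lambda>_. 0)" by (rule ext, rule pd_const)+
  then show ?case using Suc sm_Suc by simp
qed

lemma sm_fst: "sm S n fst"
proof (cases n)
  case 0 then show ?thesis by (simp add: sm_0 bounded_linear_imp_differentiable_on bounded_linear_fst)
next
  case (Suc m)
  have "pd1 fst = (\<lambda>_. 1)" "pd2 fst = (\<lambda>_. 0)"
    using pd_hd[OF bounded_linear_imp_has_derivative[OF bounded_linear_fst]] by (auto simp: fun_eq_iff)
  then show ?thesis using Suc sm_Suc sm_const by (simp add: bounded_linear_imp_differentiable_on bounded_linear_fst)
qed

lemma sm_snd: "sm S n snd"
proof (cases n)
  case 0 then show ?thesis by (simp add: sm_0 bounded_linear_imp_differentiable_on bounded_linear_snd)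
next
  case (Suc m)
  have "pd1 snd = (\<lambda>_. 0)" "pd2 snd = (\<lambda>_. 1)"
    using pd_hd[OF bounded_linear_imp_has_derivative[OF bounded_linear_snd]] by (auto simp: fun_eq_iff)
  then show ?thesis using Suc sm_Suc sm_const by (simp add: bounded_linear_imp_differentiable_on bounded_linear_snd)
qed

lemma pd_add:
  fixes f g :: "real \<times> real \<Rightarrow> real"
  assumes "f differentiable at q" "g differentiable at q"
  shows "pd1 (\<lambda>x. f x + g x) q = pd1 f q + pd1 g q" "pd2 (\<lambda>x. f x + g x) q = pd2 f q + pd2 g q"
  using pd_hd[OF has_derivative_add[OF has_derivative_pd_real[OF assms(1)] has_derivative_pd_real[OF assms(2)]]]
  by auto

lemma pd_diff:
  fixes f g :: "real \<times> real \<Rightarrow> real"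
  assumes "f differentiable at q" "g differentiable at q"
  shows "pd1 (\<lambda>x. f x - g x) q = pd1 f q - pd1 g q" "pd2 (\<lambda>x. f x - g x) q = pd2 f q - pd2 g q"
  using pd_hd[OF has_derivative_diff[OF has_derivative_pd_real[OF assms(1)] has_derivative_pd_real[OF assms(2)]]]
  by auto

lemma pd_mult:
  fixes f g :: "real \<times> real \<Rightarrow> real"
  assumes "f differentiable at q" "g differentiable at q"
  shows "pd1 (\<lambda>x. f x * g x) q = pd1 f q * g q + f q * pd1 g q"
        "pd2 (\<lambda>x. f x * g x) q = pd2 f q * g q + f q * pd2 g q"
  using pd_hd[OF has_derivative_mult[OF has_derivative_pd_real[OF assms(1)] has_derivative_pd_real[OF assms(2)]]]
  by (auto simp: algebra_simps)

lemma pd_inverse: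
  fixes f :: "real \<times> real \<Rightarrow> real"
  assumes "f differentiable at q" "f q \<noteq> 0"
  shows "pd1 (\<lambda>x. inverse (f x)) q = - (pd1 f q * (inverse (f q) * inverse (f q)))"
        "pd2 (\<lambda>x. inverse (f x)) q = - (pd2 f q * (inverse (f q) * inverse (f q)))"
  using pd_hd[OF Deriv.has_derivative_inverse[OF assms(2) has_derivative_pd_real[OF assms(1)]]]
  by (auto simp: algebra_simps)

lemma sm_add: "open S \<Longrightarrow> sm S n f \<Longrightarrow> sm S n g \<Longrightarrow> sm S n (\<lambda>x. f x + g x)"
proof (induction n arbitrary: f g)
  case 0 then show ?case by (simp add: sm_0 differentiable_on_add)
next
  case (Suc n)
  have d: "\<And>x. x \<in> S \<Longrightarrow> f differentiable at x \<and> g differentiable at x"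
    using Suc.prems sm_diff_at by blast
  have p: "sm S n (pd1 f)" "sm S n (pd2 f)" "sm S n (pd1 g)" "sm S n (pd2 g)"
    using Suc.prems(2,3) sm_Suc by auto
  have "sm S n (pd1 (\<lambda>x. f x + g x))"
    by (rule sm_cong[OF Suc.prems(1) _ Suc.IH[OF Suc.prems(1) p(1) p(3)]]) (simp add: pd_add d)
  moreover have "sm S n (pd2 (\<lambda>x. f x + g x))"
    by (rule sm_cong[OF Suc.prems(1) _ Suc.IH[OF Suc.prems(1) p(2) p(4)]]) (simp add: pd_add d)
  moreover have "(\<lambda>x. f x + g x) differentiable_on S"
    using Suc.prems(2,3) sm_Suc differentiable_on_add by blast
  ultimately show ?case using sm_Suc by blast
qed

lemma sm_diff: "open S \<Longrightarrow> sm S n f \<Longrightarrow> sm S n g \<Longrightarrow> sm S n (\<lambda>x. f x - g x)"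
proof (induction n arbitrary: f g)
  case 0 then show ?case by (simp add: sm_0 differentiable_on_diff)
next
  case (Suc n)
  have d: "\<And>x. x \<in> S \<Longrightarrow> f differentiable at x \<and> g differentiable at x"
    using Suc.prems sm_diff_at by blast
  have p: "sm S n (pd1 f)" "sm S n (pd2 f)" "sm S n (pd1 g)" "sm S n (pd2 g)"
    using Suc.prems(2,3) sm_Suc by auto
  have "sm S n (pd1 (\<lambda>x. f x - g x))"
    by (rule sm_cong[OF Suc.prems(1) _ Suc.IH[OF Suc.prems(1) p(1) p(3)]]) (simp add: pd_diff d)
  moreover have "sm S n (pd2 (\<lambda>x. f x - g x))"
    by (rule sm_cong[OF Suc.prems(1) _ Suc.IH[OF Suc.prems(1) p(2) p(4)]]) (simp add: pd_diff d)
  moreover have "(\<lambda>x. f x - g x) differentiable_on S"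
    using Suc.prems(2,3) sm_Suc differentiable_on_diff by blast
  ultimately show ?case using sm_Suc by blast
qed

lemma sm_mult: "open S \<Longrightarrow> sm S n f \<Longrightarrow> sm S n g \<Longrightarrow> sm S n (\<lambda>x. f x * g x)"
proof (induction n arbitrary: f g)
  case 0 then show ?case by (simp add: sm_0 differentiable_on_mult)
next
  case (Suc n)
  have d: "\<And>x. x \<in> S \<Longrightarrow> f differentiable at x \<and> g differentiable at x"
    using Suc.prems sm_diff_at by blast
  have fn: "sm S n f" "sm S n g" using sm_mono[OF Suc.prems(2), of n] sm_mono[OF Suc.prems(3), of n] by auto
  have p: "sm S n (pd1 f)" "sm S n (pd2 f)" "sm S n (pd1 g)" "sm S n (pd2 g)"
    using Suc.prems(2,3) sm_Suc by auto
  have "sm S n (pd1 (\<lambda>x. f x * g x))"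
    by (rule sm_cong[OF Suc.prems(1) _ sm_add[OF Suc.prems(1) Suc.IH[OF Suc.prems(1) p(1) fn(2)] Suc.IH[OF Suc.prems(1) fn(1) p(3)]]])
      (simp add: pd_mult d)
  moreover have "sm S n (pd2 (\<lambda>x. f x * g x))"
    by (rule sm_cong[OF Suc.prems(1) _ sm_add[OF Suc.prems(1) Suc.IH[OF Suc.prems(1) p(2) fn(2)] Suc.IH[OF Suc.prems(1) fn(1) p(4)]]])
      (simp add: pd_mult d)
  moreover have "(\<lambda>x. f x * g x) differentiable_on S"
    using Suc.prems(2,3) sm_Suc differentiable_on_mult by blast
  ultimately show ?case using sm_Suc by blast
qed

lemma sm_inverse: "open S \<Longrightarrow> (\<And>x. x \<in> S \<Longrightarrow> f x \<noteq> 0) \<Longrightarrow> sm S n f \<Longrightarrow> sm S n (\<lambda>x. inverse (f x))"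
proof (induction n)
  case 0 then show ?case by (simp add: sm_0 differentiable_on_inverse)
next
  case (Suc n)
  have d: "\<And>x. x \<in> S \<Longrightarrow> f differentiable at x"
    using Suc.prems sm_diff_at by blast
  have fn: "sm S n f" using sm_mono[OF Suc.prems(3), of n] by auto
  have i: "sm S n (\<lambda>x. inverse (f x))" using Suc.IH[OF Suc.prems(1,2) fn] .
  have ii: "sm S n (\<lambda>x. inverse (f x) * inverse (f x))" using sm_mult[OF Suc.prems(1) i i] .
  have p: "sm S n (pd1 f)" "sm S n (pd2 f)" using Suc.prems(3) sm_Suc by auto
  have "sm S n (pd1 (\<lambda>x. inverse (f x)))"
    by (rule sm_cong[OF Suc.prems(1) _ sm_diff[OF Suc.prems(1) sm_const sm_mult[OF Suc.prems(1) p(1) ii]]])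
      (simp add: pd_inverse d Suc.prems(2))
  moreover have "sm S n (pd2 (\<lambda>x. inverse (f x)))"
    by (rule sm_cong[OF Suc.prems(1) _ sm_diff[OF Suc.prems(1) sm_const sm_mult[OF Suc.prems(1) p(2) ii]]])
      (simp add: pd_inverse d Suc.prems(2))
  moreover have "f differentiable_on S" using Suc.prems(3) sm_Suc by blast
  then have "(\<lambda>x. inverse (f x)) differentiable_on S"
    by (rule differentiable_on_inverse) (use Suc.prems(2) in auto)
  ultimately show ?case using sm_Suc by blast
qed

lemma pd1_deriv:
  fixes f :: "real \<times> real \<Rightarrow> real"
  assumes "f differentiable at (s,t)"
  shows "((\<lambda>s. f (s,t)) has_real_derivative pd1 f (s,t)) (at s)"
proof -
  have "((\<lambda>s. (s,t)) has_derivative (\<lambda>h. (h,0))) (at s)"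
    by (auto intro!: derivative_eq_intros)
  from has_derivative_compose[OF this has_derivative_pd_real[OF assms]]
  have "((\<lambda>s. f (s,t)) has_derivative (\<lambda>h. h * pd1 f (s,t))) (at s)" by simp
  moreover have "(\<lambda>h. h * pd1 f (s,t)) = (*) (pd1 f (s,t))" by (rule ext) (simp add: mult.commute)
  ultimately show ?thesis unfolding has_field_derivative_def by simp
qed

lemma pd2_deriv:
  fixes f :: "real \<times> real \<Rightarrow> real"
  assumes "f differentiable at (s,t)"
  shows "((\<lambda>t. f (s,t)) has_real_derivative pd2 f (s,t)) (at t)"
proof -
  have "((\<lambda>t. (s,t)) has_derivative (\<lambda>h. (0,h))) (at t)"
    by (auto intro!: derivative_eq_intros)
  from has_derivative_compose[OF this has_derivative_pd_real[OF assms]]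
  have "((\<lambda>t. f (s,t)) has_derivative (\<lambda>h. h * pd2 f (s,t))) (at t)" by simp
  moreover have "(\<lambda>h. h * pd2 f (s,t)) = (*) (pd2 f (s,t))" by (rule ext) (simp add: mult.commute)
  ultimately show ?thesis unfolding has_field_derivative_def by simp
qed

lemma mvt2:
  fixes f :: "real \<times> real \<Rightarrow> real"
  assumes "h > 0"
    and D: "\<And>s t. s \<in> {x..x+h} \<Longrightarrow> t \<in> {y..y+h} \<Longrightarrow> f differentiable at (s,t) \<and> pd1 f differentiable at (s,t)"
  shows "\<exists>\<xi> \<eta>. \<xi> \<in> {x..x+h} \<and> \<eta> \<in> {y..y+h} \<and>
           f (x+h,y+h) - f (x+h,y) - f (x,y+h) + f (x,y) = h * h * pd2 (pd1 f) (\<xi>,\<eta>)"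
proof -
  define G where "G s = f (s,y+h) - f (s,y)" for s
  have "\<And>s. x \<le> s \<Longrightarrow> s \<le> x + h \<Longrightarrow>
     (G has_derivative (\<lambda>d. d * (pd1 f (s,y+h) - pd1 f (s,y)))) (at s within {x..x+h})"
  proof -
    fix s assume "x \<le> s" "s \<le> x + h"
    then have "f differentiable at (s,y+h)" "f differentiable at (s,y)" using D assms(1) by auto
    from DERIV_diff[OF pd1_deriv[OF this(1)] pd1_deriv[OF this(2)]]
    have "(G has_real_derivative (pd1 f (s,y+h) - pd1 f (s,y))) (at s)" unfolding G_def .
    moreover have "(\<lambda>d. d * (pd1 f (s,y+h) - pd1 f (s,y))) = (*) (pd1 f (s,y+h) - pd1 f (s,y))"
      by (rule ext) (simp add: mult.commute)
    ultimately show "(G has_derivative (\<lambda>d. d * (pd1 f (s,y+h) - pd1 f (s,y)))) (at s within {x..x+h})"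
      unfolding has_field_derivative_def by (auto intro: has_derivative_at_withinI)
  qed
  from mvt_simple[of x "x+h" G, OF _ this] assms(1) obtain \<xi> where
    \<xi>: "\<xi> \<in> {x<..<x+h}" "G (x+h) - G x = h * (pd1 f (\<xi>,y+h) - pd1 f (\<xi>,y))" by auto
  define H where "H t = pd1 f (\<xi>,t)" for t
  have "\<And>t. y \<le> t \<Longrightarrow> t \<le> y + h \<Longrightarrow>
     (H has_derivative (\<lambda>d. d * pd2 (pd1 f) (\<xi>,t))) (at t within {y..y+h})"
  proof -
    fix t assume "y \<le> t" "t \<le> y + h"
    then have "pd1 f differentiable at (\<xi>,t)" using D \<xi>(1) by auto
    from pd2_deriv[OF this] have "(H has_real_derivative pd2 (pd1 f) (\<xi>,t)) (at t)" unfolding H_def .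
    moreover have "(\<lambda>d. d * pd2 (pd1 f) (\<xi>,t)) = (*) (pd2 (pd1 f) (\<xi>,t))"
      by (rule ext) (simp add: mult.commute)
    ultimately show "(H has_derivative (\<lambda>d. d * pd2 (pd1 f) (\<xi>,t))) (at t within {y..y+h})"
      unfolding has_field_derivative_def by (auto intro: has_derivative_at_withinI)
  qed
  from mvt_simple[of y "y+h" H, OF _ this] assms(1) obtain \<eta> where
    \<eta>: "\<eta> \<in> {y<..<y+h}" "H (y+h) - H y = h * pd2 (pd1 f) (\<xi>,\<eta>)" by auto
  have "f (x+h,y+h) - f (x+h,y) - f (x,y+h) + f (x,y) = G (x+h) - G x" unfolding G_def by simp
  also have "\<dots> = h * (H (y+h) - H y)" using \<xi>(2) unfolding H_def by simp
  also have "\<dots> = h * h * pd2 (pd1 f) (\<xi>,\<eta>)" using \<eta>(2) by simp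
  finally show ?thesis using \<xi>(1) \<eta>(1) by (intro exI[of _ \<xi>] exI[of _ \<eta>]) auto
qed

lemma pd1_swap: "pd1 (\<lambda>z. f (snd z, fst z)) = (\<lambda>z. pd2 f (snd z, fst z))"
  by (simp add: pd1_def pd2_def fun_eq_iff)

lemma pd2_swap: "pd2 (\<lambda>z. f (snd z, fst z)) = (\<lambda>z. pd1 f (snd z, fst z))"
  by (simp add: pd1_def pd2_def fun_eq_iff)

lemma diff_swap:
  fixes g :: "real \<times> real \<Rightarrow> real"
  assumes "g differentiable at (snd z, fst z)"
  shows "(\<lambda>z. g (snd z, fst z)) differentiable at z"
proof -
  have "(\<lambda>z. (snd z, fst z)) differentiable at z"
    by (rule bounded_linear_imp_differentiable) (auto intro: bounded_linear_Pair bounded_linear_fst bounded_linear_snd)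
  from differentiable_chain_at[OF this] assms show ?thesis by (simp add: o_def)
qed

lemma schwarz:
  fixes f :: "real \<times> real \<Rightarrow> real"
  assumes "open S" "sm S 2 f" "q \<in> S"
  shows "pd2 (pd1 f) q = pd1 (pd2 f) q"
proof (rule ccontr)
  assume ne: "pd2 (pd1 f) q \<noteq> pd1 (pd2 f) q"
  define A where "A = pd2 (pd1 f) q"
  define B where "B = pd1 (pd2 f) q"
  define e where "e = \<bar>A - B\<bar> / 2"
  have e: "e > 0" using ne unfolding e_def A_def B_def by simp
  have s2: "sm S 2 f" "sm S 1 (pd1 f)" "sm S 1 (pd2 f)" "sm S 0 (pd2 (pd1 f))" "sm S 0 (pd1 (pd2 f))"
    using assms(2) sm_Suc[of S 1 f] sm_Suc[of S 0 "pd1 f"] sm_Suc[of S 0 "pd2 f"]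
    by (auto simp: numeral_2_eq_2)
  have dA: "\<And>z. z \<in> S \<Longrightarrow> f differentiable at z \<and> pd1 f differentiable at z \<and> pd2 f differentiable at z
     \<and> pd2 (pd1 f) differentiable at z \<and> pd1 (pd2 f) differentiable at z"
    using s2 sm_diff_at[OF assms(1)] by blast
  have cA: "isCont (pd2 (pd1 f)) q" "isCont (pd1 (pd2 f)) q"
    using dA[OF assms(3)] differentiable_imp_continuous_within by blast+
  obtain d1 where d1: "d1 > 0" "\<And>z. dist z q < d1 \<Longrightarrow> dist (pd2 (pd1 f) z) A < e"
    using cA(1) e unfolding continuous_at_eps_delta A_def by blast
  obtain d2 where d2: "d2 > 0" "\<And>z. dist z q < d2 \<Longrightarrow> dist (pd1 (pd2 f) z) B < e"
    using cA(2) e unfolding continuous_at_eps_delta B_def by blast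
  obtain d0 where d0: "d0 > 0" "ball q d0 \<subseteq> S" using assms(1,3) open_contains_ball by blast
  define d where "d = min d0 (min d1 d2)"
  have d: "d > 0" "d \<le> d0" "d \<le> d1" "d \<le> d2" using d0 d1 d2 unfolding d_def by auto
  define h where "h = d / 3"
  have h: "h > 0" using d unfolding h_def by simp
  obtain x y where q: "q = (x,y)" by (cases q)
  have near: "dist (s,t) q < d" if "s \<in> {x..x+h}" "t \<in> {y..y+h}" for s t
  proof -
    have "dist (s,t) q = sqrt ((s-x)^2 + (t-y)^2)" unfolding q dist_Pair_Pair dist_real_def
      by (simp add: power2_abs)
    also have "\<dots> \<le> \<bar>s-x\<bar> + \<bar>t-y\<bar>" by (rule sqrt_sum_squares_le_sum_abs)
    also have "\<dots> \<le> 2 * h" using that by auto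
    also have "\<dots> < d" using d unfolding h_def by simp
    finally show ?thesis .
  qed
  have inS: "(s,t) \<in> S" if "s \<in> {x..x+h}" "t \<in> {y..y+h}" for s t
    using near[OF that] d d0(2) by (auto simp: dist_commute)
  obtain \<xi> \<eta> where \<xi>\<eta>: "\<xi> \<in> {x..x+h}" "\<eta> \<in> {y..y+h}"
    "f (x+h,y+h) - f (x+h,y) - f (x,y+h) + f (x,y) = h * h * pd2 (pd1 f) (\<xi>,\<eta>)"
    using mvt2[OF h, of x y f] inS dA by blast
  define fs where "fs = (\<lambda>z. f (snd z, fst z))"
  have Dfs: "fs differentiable at (s,t) \<and> pd1 fs differentiable at (s,t)"
    if "s \<in> {y..y+h}" "t \<in> {x..x+h}" for s t
  proof -
    have "(t,s) \<in> S" using inS that by blast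
    then show ?thesis unfolding fs_def pd1_swap using dA diff_swap[of f "(s,t)"] diff_swap[of "pd2 f" "(s,t)"]
      by simp
  qed
  obtain \<eta>' \<xi>' where \<xi>\<eta>': "\<eta>' \<in> {y..y+h}" "\<xi>' \<in> {x..x+h}"
    "fs (y+h,x+h) - fs (y+h,x) - fs (y,x+h) + fs (y,x) = h * h * pd2 (pd1 fs) (\<eta>',\<xi>')"
    using mvt2[OF h, of y x fs] Dfs by blast
  have "pd2 (pd1 fs) (\<eta>',\<xi>') = pd1 (pd2 f) (\<xi>',\<eta>')"
    unfolding fs_def pd1_swap pd2_swap by simp
  then have E: "fs (y+h,x+h) - fs (y+h,x) - fs (y,x+h) + fs (y,x) = h * h * pd1 (pd2 f) (\<xi>',\<eta>')"
    using \<xi>\<eta>'(3) by simp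
  have eq: "h * h * pd2 (pd1 f) (\<xi>,\<eta>) = h * h * pd1 (pd2 f) (\<xi>',\<eta>')"
    using \<xi>\<eta>(3) E unfolding fs_def by (simp only: prod.sel)
  then have eq2: "pd2 (pd1 f) (\<xi>,\<eta>) = pd1 (pd2 f) (\<xi>',\<eta>')" using h by simp
  have "dist (pd2 (pd1 f) (\<xi>,\<eta>)) A < e" using d1(2) near[OF \<xi>\<eta>(1,2)] d by simp
  moreover have "dist (pd1 (pd2 f) (\<xi>',\<eta>')) B < e" using d2(2) near[OF \<xi>\<eta>'(2,1)] d by simp
  ultimately show False using eq2 unfolding e_def dist_real_def abs_real_def by (auto split: if_splits)
qed

lemma X_eq: "(\<lambda>(x, y). (x, y, \<phi> (x, y))) = (\<lambda>q. (fst q, snd q, \<phi> q))"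
  by (auto simp: fun_eq_iff)

lemma X_hd:
  fixes \<phi> :: "real \<times> real \<Rightarrow> real"
  assumes "\<phi> differentiable at q"
  shows "((\<lambda>q. (fst q, snd q, \<phi> q)) has_derivative (\<lambda>h. (fst h, snd h, fst h * pd1 \<phi> q + snd h * pd2 \<phi> q))) (at q)"
  by (intro has_derivative_Pair has_derivative_fst has_derivative_snd has_derivative_ident has_derivative_pd_real assms)

lemma Y_hd:
  fixes g :: "real \<times> real \<Rightarrow> real"
  assumes "g differentiable at q"
  shows "((\<lambda>q. (c1::real, c2::real, g q)) has_derivative (\<lambda>h. (0, 0, fst h * pd1 g q + snd h * pd2 g q))) (at q)"
  by (intro has_derivative_Pair has_derivative_const has_derivative_pd_real assms)

lemma X_derivs:
  fixes \<phi> :: "real \<times> real \<Rightarrow> real"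
  assumes "open \<Omega>" "sm \<Omega> 2 \<phi>" "q \<in> \<Omega>"
  defines "X \<equiv> (\<lambda>(x, y). (x, y, \<phi> (x, y)))"
  shows "pd1 X q = (1, 0, pd1 \<phi> q)" "pd2 X q = (0, 1, pd2 \<phi> q)"
    "pd1 (pd1 X) q = (0, 0, pd1 (pd1 \<phi>) q)" "pd2 (pd1 X) q = (0, 0, pd2 (pd1 \<phi>) q)"
    "pd2 (pd2 X) q = (0, 0, pd2 (pd2 \<phi>) q)"
proof -
  have s: "sm \<Omega> 1 (pd1 \<phi>)" "sm \<Omega> 1 (pd2 \<phi>)" using assms(2) sm_Suc[of \<Omega> 1 \<phi>] by (auto simp: numeral_2_eq_2)
  have d: "\<And>z. z \<in> \<Omega> \<Longrightarrow> \<phi> differentiable at z \<and> pd1 \<phi> differentiable at z \<and> pd2 \<phi> differentiable at z"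
    using sm_diff_at[OF assms(1)] assms(2) s by blast
  have X1: "\<And>z. z \<in> \<Omega> \<Longrightarrow> pd1 X z = (1, 0, pd1 \<phi> z)" and X2: "\<And>z. z \<in> \<Omega> \<Longrightarrow> pd2 X z = (0, 1, pd2 \<phi> z)"
    unfolding X_def X_eq using pd_hd[OF X_hd] d by auto
  then show "pd1 X q = (1, 0, pd1 \<phi> q)" "pd2 X q = (0, 1, pd2 \<phi> q)" using assms(3) by auto
  have "pd1 (pd1 X) q = pd1 (\<lambda>z. (1::real, 0::real, pd1 \<phi> z)) q"
    by (rule pd1_cong[OF assms(1,3)]) (simp add: X1)
  also have "\<dots> = (0, 0, pd1 (pd1 \<phi>) q)" using pd_hd[OF Y_hd] d[OF assms(3)] by auto
  finally show "pd1 (pd1 X) q = (0, 0, pd1 (pd1 \<phi>) q)" .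
  have "pd2 (pd1 X) q = pd2 (\<lambda>z. (1::real, 0::real, pd1 \<phi> z)) q"
    by (rule pd2_cong[OF assms(1,3)]) (simp add: X1)
  also have "\<dots> = (0, 0, pd2 (pd1 \<phi>) q)" using pd_hd[OF Y_hd] d[OF assms(3)] by auto
  finally show "pd2 (pd1 X) q = (0, 0, pd2 (pd1 \<phi>) q)" .
  have "pd2 (pd2 X) q = pd2 (\<lambda>z. (0::real, 1::real, pd2 \<phi> z)) q"
    by (rule pd2_cong[OF assms(1,3)]) (simp add: X2)
  also have "\<dots> = (0, 0, pd2 (pd2 \<phi>) q)" using pd_hd[OF Y_hd] d[OF assms(3)] by auto
  finally show "pd2 (pd2 X) q = (0, 0, pd2 (pd2 \<phi>) q)" .
qed

lemma pde_from_minimal: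
  fixes \<phi> :: "real \<times> real \<Rightarrow> real"
  assumes "open \<Omega>" "sm \<Omega> 2 \<phi>" "q \<in> \<Omega>"
    and T: "timelike_on \<Omega> (\<lambda>(x, y). (x, y, \<phi> (x, y)))"
    and M: "minimal_on \<Omega> (\<lambda>(x, y). (x, y, \<phi> (x, y)))"
  shows "(pd1 \<phi> q)\<^sup>2 + (pd2 \<phi> q)\<^sup>2 > 1"
    "(1 - (pd1 \<phi> q)\<^sup>2) * pd2 (pd2 \<phi>) q + 2 * pd1 \<phi> q * pd2 \<phi> q * pd2 (pd1 \<phi>) q
       + (1 - (pd2 \<phi> q)\<^sup>2) * pd1 (pd1 \<phi>) q = 0"
proof -
  define X where "X = (\<lambda>(x, y). (x, y, \<phi> (x, y)))"
  define a where "a = pd1 \<phi> q"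
  define b where "b = pd2 \<phi> q"
  define r where "r = pd1 (pd1 \<phi>) q"
  define s where "s = pd2 (pd1 \<phi>) q"
  define t where "t = pd2 (pd2 \<phi>) q"
  note XD = X_derivs[OF assms(1-3), folded X_def a_def b_def r_def s_def t_def]
  have E: "fundE X q = 1 - a\<^sup>2" "fundF X q = - (a * b)" "fundG X q = 1 - b\<^sup>2"
    unfolding fundE_def fundF_def fundG_def XD lip_def by (auto simp: power2_eq_square)
  have tl: "fundE X q * fundG X q - (fundF X q)\<^sup>2 < 0" using T assms(3) unfolding timelike_on_def X_def by auto
  then have ab: "a\<^sup>2 + b\<^sup>2 > 1" unfolding E by (simp add: algebra_simps power2_eq_square)
  then show "(pd1 \<phi> q)\<^sup>2 + (pd2 \<phi> q)\<^sup>2 > 1" unfolding a_def b_def .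
  define k where "k = 1 / sqrt \<bar>a\<^sup>2 + b\<^sup>2 - 1\<bar>"
  have k: "k > 0" using ab unfolding k_def by simp
  have lc: "lcross (pd1 X q) (pd2 X q) = (-a, -b, -1)" unfolding XD lcross_def by simp
  have nn: "lip (-a, -b, -1) (-a, -b, -1) = a\<^sup>2 + b\<^sup>2 - 1" unfolding lip_def by (simp add: power2_eq_square)
  have un: "unit_normal X q = (- (k * a), - (k * b), - k)"
    unfolding unit_normal_def lc Let_def nn k_def by simp
  have L: "fundL X q = r * k" "fundM X q = s * k" "fundN X q = t * k"
    unfolding fundL_def fundM_def fundN_def un XD lip_def by auto
  have "mean_curvature X q = 0" using M assms(3) unfolding minimal_on_def X_def by auto
  then have "fundE X q * fundN X q - 2 * fundF X q * fundM X q + fundG X q * fundL X q = 0"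
    unfolding mean_curvature_def using tl by simp
  then have "k * ((1 - a\<^sup>2) * t + 2 * a * b * s + (1 - b\<^sup>2) * r) = 0"
    unfolding E L by (simp add: algebra_simps)
  then show "(1 - (pd1 \<phi> q)\<^sup>2) * pd2 (pd2 \<phi>) q + 2 * pd1 \<phi> q * pd2 \<phi> q * pd2 (pd1 \<phi>) q
       + (1 - (pd2 \<phi> q)\<^sup>2) * pd1 (pd1 \<phi>) q = 0"
    using k unfolding a_def b_def r_def s_def t_def by simp
qed

lemma pd_snd: "pd1 snd q = 0" "pd2 snd q = 1"
  using pd_hd[OF bounded_linear_imp_has_derivative[OF bounded_linear_snd]] by auto

lemma comp_pd:
  fixes Q :: "real \<times> real \<Rightarrow> real"
  assumes "Q differentiable at (g w)"
    and "(g has_derivative (\<lambda>k. (fst k, (snd k - a * fst k) * ib))) (at w)"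
  shows "pd1 (\<lambda>w. Q (g w)) w = pd1 Q (g w) - pd2 Q (g w) * a * ib"
    "pd2 (\<lambda>w. Q (g w)) w = pd2 Q (g w) * ib"
    "(\<lambda>w. Q (g w)) differentiable at w"
proof -
  have H: "((\<lambda>w. Q (g w)) has_derivative
     (\<lambda>k. fst k * pd1 Q (g w) + ((snd k - a * fst k) * ib) * pd2 Q (g w))) (at w)"
    using has_derivative_compose[OF assms(2) has_derivative_pd_real[OF assms(1)]] by simp
  show "pd1 (\<lambda>w. Q (g w)) w = pd1 Q (g w) - pd2 Q (g w) * a * ib"
    using pd_hd(1)[OF H] by (simp add: algebra_simps)
  show "pd2 (\<lambda>w. Q (g w)) w = pd2 Q (g w) * ib"
    using pd_hd(2)[OF H] by (simp add: algebra_simps)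
  show "(\<lambda>w. Q (g w)) differentiable at w" using H differentiable_def by blast
qed

lemma comp_sm:
  fixes Q A B :: "real \<times> real \<Rightarrow> real" and g :: "real \<times> real \<Rightarrow> real \<times> real"
  assumes "open U" "open W" and gU: "\<And>w. w \<in> W \<Longrightarrow> g w \<in> U"
    and gd: "\<And>w. w \<in> W \<Longrightarrow> (g has_derivative (\<lambda>k. (fst k, (snd k - A (g w) * fst k) * inverse (B (g w))))) (at w)"
    and smA: "\<And>n. sm U n A" and smB: "\<And>n. sm U n (\<lambda>q. inverse (B q))"
  shows "sm U n Q \<Longrightarrow> sm W n (\<lambda>w. Q (g w))"
proof (induction n arbitrary: Q)
  case 0
  have "\<forall>w\<in>W. (\<lambda>w. Q (g w)) differentiable at w"
    using comp_pd(3)[OF sm_diff_at[OF assms(1) 0 gU] gd] by blast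
  then show ?case unfolding sm_0 using differentiable_on_eq_differentiable_at[OF assms(2)] by blast
next
  case (Suc n)
  have dQ: "\<And>w. w \<in> W \<Longrightarrow> Q differentiable at (g w)" using sm_diff_at[OF assms(1) Suc.prems gU] .
  have p: "sm U n (pd1 Q)" "sm U n (pd2 Q)" using Suc.prems sm_Suc by auto
  have s1: "sm U n (\<lambda>q. pd1 Q q - pd2 Q q * A q * inverse (B q))"
    by (intro sm_diff[OF assms(1)] sm_mult[OF assms(1)] p smA smB)
  have s2: "sm U n (\<lambda>q. pd2 Q q * inverse (B q))"
    by (intro sm_mult[OF assms(1)] p smB)
  have "sm W n (pd1 (\<lambda>w. Q (g w)))"
    by (rule sm_cong[OF assms(2) _ Suc.IH[OF s1]]) (simp add: comp_pd(1)[OF dQ gd])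
  moreover have "sm W n (pd2 (\<lambda>w. Q (g w)))"
    by (rule sm_cong[OF assms(2) _ Suc.IH[OF s2]]) (simp add: comp_pd(2)[OF dQ gd])
  moreover have "(\<lambda>w. Q (g w)) differentiable_on W"
    using comp_pd(3)[OF dQ gd] differentiable_on_eq_differentiable_at[OF assms(2)] by blast
  ultimately show ?case using sm_Suc by blast
qed

lemma sm_subset: "sm S n f \<Longrightarrow> T \<subseteq> S \<Longrightarrow> sm T n f"
  unfolding sm_def using differentiable_on_subset by blast

lemma bi_algebra:
  fixes a b r s t :: real
  assumes "b \<noteq> 0" "(1 - a\<^sup>2) * t + 2 * a * b * s + (1 - b\<^sup>2) * r = 0"
  defines "ib \<equiv> inverse b"
  shows "(1 - ib\<^sup>2) * ((- (r * ib) + a * s * ib * ib) - (- (s * ib) + a * t * ib * ib) * a * ib)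
     + 2 * (- (a * ib)) * ib * ((- (s * ib) + a * t * ib * ib) * ib)
     - (1 + (- (a * ib))\<^sup>2) * ((- (t * ib * ib)) * ib) = 0"
proof -
  have "(1 - ib\<^sup>2) * ((- (r * ib) + a * s * ib * ib) - (- (s * ib) + a * t * ib * ib) * a * ib)
     + 2 * (- (a * ib)) * ib * ((- (s * ib) + a * t * ib * ib) * ib)
     - (1 + (- (a * ib))\<^sup>2) * ((- (t * ib * ib)) * ib)
     = ((1 - a\<^sup>2) * t + 2 * a * b * s + (1 - b\<^sup>2) * r) / b^3"
    using assms(1) unfolding ib_def by (simp add: divide_simps inverse_eq_divide) (simp add: algebra_simps power2_eq_square power3_eq_cube)
  then show ?thesis using assms(2) by simp
qed

lemma bi_algebra2:
  fixes a b r s t ib px pz pxx pxz pzz P1x P1z P2z :: real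
  assumes "b \<noteq> 0" "(1 - a\<^sup>2) * t + 2 * a * b * s + (1 - b\<^sup>2) * r = 0"
    and "ib = inverse b" "px = - (a * ib)" "pz = ib"
    "pxx = P1x - P1z * a * ib" "pxz = P1z * ib" "pzz = P2z * ib"
    "P1x = - (a * (- (ib * s * ib)) + r * ib)" "P1z = - (a * (- (ib * t * ib)) + s * ib)"
    "P2z = - (ib * t * ib)"
  shows "(1 - pz\<^sup>2) * pxx + 2 * px * pz * pxz - (1 + px\<^sup>2) * pzz = 0"
proof -
  have "(1 - pz\<^sup>2) * pxx + 2 * px * pz * pxz - (1 + px\<^sup>2) * pzz =
     (1 - ib\<^sup>2) * ((- (r * ib) + a * s * ib * ib) - (- (s * ib) + a * t * ib * ib) * a * ib)
     + 2 * (- (a * ib)) * ib * ((- (s * ib) + a * t * ib * ib) * ib)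
     - (1 + (- (a * ib))\<^sup>2) * ((- (t * ib * ib)) * ib)"
    unfolding assms(4-11) by (simp add: algebra_simps)
  also have "\<dots> = 0" using bi_algebra[OF assms(1,2)] assms(3) by simp
  finally show ?thesis .
qed

lemma main_case:
  fixes \<phi> :: "real \<times> real \<Rightarrow> real" and \<Omega> :: "(real \<times> real) set"
  assumes op\<Omega>: "open \<Omega>" and sm\<phi>: "\<And>n. sm \<Omega> n \<phi>"
    and pde: "\<And>q. q \<in> \<Omega> \<Longrightarrow> (1 - (pd1 \<phi> q)\<^sup>2) * pd2 (pd2 \<phi>) q + 2 * pd1 \<phi> q * pd2 \<phi> q * pd2 (pd1 \<phi>) q
       + (1 - (pd2 \<phi> q)\<^sup>2) * pd1 (pd1 \<phi>) q = 0"
    and p: "p \<in> \<Omega>" and bp: "pd2 \<phi> p \<noteq> 0"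
  shows "\<exists>U. open U \<and> p \<in> U \<and> U \<subseteq> \<Omega> \<and>
           (\<exists>W \<psi>. open W \<and> smooth_on W \<psi> \<and> born_infeld_on W \<psi> \<and>
              (\<lambda>(x, y). (x, y, \<phi> (x, y))) ` U = (\<lambda>(x, z). (x, \<psi> (x, z), z)) ` W)"
proof -
  define A where "A = pd1 \<phi>"
  define B where "B = pd2 \<phi>"
  have smA: "\<And>n. sm \<Omega> n A" and smB: "\<And>n. sm \<Omega> n B"
    using sm\<phi> sm_Suc unfolding A_def B_def by blast+
  have "isCont B p" using sm_diff_at[OF op\<Omega> smB p] differentiable_imp_continuous_within by blast
  moreover have "\<bar>B p\<bar> > 0" using bp unfolding B_def by simp
  ultimately obtain r0 where r0: "r0 > 0" "\<And>z. dist z p < r0 \<Longrightarrow> dist (B z) (B p) < \<bar>B p\<bar>"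
    unfolding continuous_at_eps_delta by blast
  obtain r1 where r1: "r1 > 0" "ball p r1 \<subseteq> \<Omega>" using op\<Omega> p open_contains_ball by blast
  define U where "U = ball p (min r0 r1)"
  have U: "open U" "p \<in> U" "U \<subseteq> \<Omega>" "convex U" using r0 r1 unfolding U_def by auto
  have BU: "\<And>q. q \<in> U \<Longrightarrow> B q \<noteq> 0"
  proof
    fix q assume "q \<in> U" "B q = 0"
    then have "dist q p < r0" unfolding U_def by (simp add: dist_commute)
    from r0(2)[OF this] \<open>B q = 0\<close> show False by simp
  qed
  have smU: "\<And>n. sm U n \<phi>" "\<And>n. sm U n A" "\<And>n. sm U n B"
    using sm\<phi> smA smB sm_subset U(3) by blast+
  have smiB: "\<And>n. sm U n (\<lambda>q. inverse (B q))" by (rule sm_inverse[OF U(1) BU smU(3)])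
  have d\<phi>: "\<And>q. q \<in> U \<Longrightarrow> \<phi> differentiable at q" using sm_diff_at[OF U(1) smU(1)] .
  have dA: "\<And>q. q \<in> U \<Longrightarrow> A differentiable at q" using sm_diff_at[OF U(1) smU(2)] .
  have dB: "\<And>q. q \<in> U \<Longrightarrow> B differentiable at q" using sm_diff_at[OF U(1) smU(3)] .
  define F where "F = (\<lambda>q. (fst q, \<phi> q))"
  have cont\<phi>: "continuous_on U \<phi>"
    using smU(1)[of 0] unfolding sm_0 by (rule differentiable_imp_continuous_on)
  have contF: "continuous_on U F" unfolding F_def
    by (intro continuous_on_Pair continuous_on_fst continuous_on_id cont\<phi>)
  have key: "\<phi> (x, y1) \<noteq> \<phi> (x, y2)" if "(x, y1) \<in> U" "(x, y2) \<in> U" "y1 < y2" for x y1 y2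
  proof
    assume eq: "\<phi> (x, y1) = \<phi> (x, y2)"
    have inU: "(x, t) \<in> U" if "y1 \<le> t" "t \<le> y2" for t
    proof -
      define u where "u = (t - y1) / (y2 - y1)"
      have u: "0 \<le> u" "u \<le> 1" using that \<open>y1 < y2\<close> unfolding u_def by (auto simp: divide_simps)
      have "(1 - u) *\<^sub>R (x, y1) + u *\<^sub>R (x, y2) \<in> U"
        using convexD[OF U(4) \<open>(x, y1) \<in> U\<close> \<open>(x, y2) \<in> U\<close>, of "1 - u" u] u by simp
      moreover have "(1 - u) *\<^sub>R (x, y1) + u *\<^sub>R (x, y2) = (x, t)"
      proof -
        have "u * (y2 - y1) = t - y1" using \<open>y1 < y2\<close> unfolding u_def by simp
        then have "(1 - u) * y1 + u * y2 = t" by (simp add: algebra_simps)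
        moreover have "(1 - u) * x + u * x = x" by (simp add: algebra_simps)
        ultimately show ?thesis by simp
      qed
      ultimately show ?thesis by simp
    qed
    have "\<And>t. y1 \<le> t \<Longrightarrow> t \<le> y2 \<Longrightarrow>
      ((\<lambda>t. \<phi> (x, t)) has_derivative (\<lambda>d. d * B (x, t))) (at t within {y1..y2})"
    proof -
      fix t assume "y1 \<le> t" "t \<le> y2"
      then have "(x, t) \<in> U" by (rule inU)
      from pd2_deriv[OF d\<phi>[OF this]] have "((\<lambda>t. \<phi> (x, t)) has_real_derivative B (x, t)) (at t)"
        unfolding B_def .
      moreover have "(\<lambda>d. d * B (x, t)) = (*) (B (x, t))" by (rule ext) (simp add: mult.commute)
      ultimately show "((\<lambda>t. \<phi> (x, t)) has_derivative (\<lambda>d. d * B (x, t))) (at t within {y1..y2})"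
        unfolding has_field_derivative_def by (auto intro: has_derivative_at_withinI)
    qed
    from mvt_simple[of y1 y2 "\<lambda>t. \<phi> (x, t)", OF \<open>y1 < y2\<close> this] obtain \<eta> where
      \<eta>: "\<eta> \<in> {y1<..<y2}" "\<phi> (x, y2) - \<phi> (x, y1) = (y2 - y1) * B (x, \<eta>)" by auto
    have "B (x, \<eta>) \<noteq> 0" using BU inU \<eta>(1) by auto
    then show False using \<eta>(2) eq \<open>y1 < y2\<close> by simp
  qed
  have injF: "inj_on F U"
  proof (rule inj_onI)
    fix q1 q2 assume q: "q1 \<in> U" "q2 \<in> U" "F q1 = F q2"
    obtain x1 y1 where q1: "q1 = (x1, y1)" by (cases q1)
    obtain x2 y2 where q2: "q2 = (x2, y2)" by (cases q2)
    have x: "x1 = x2" and ph: "\<phi> (x1, y1) = \<phi> (x2, y2)" using q(3) unfolding F_def q1 q2 by auto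
    show "q1 = q2"
    proof (cases y1 y2 rule: linorder_cases)
      case less then show ?thesis using key[of x1 y1 y2] q ph x unfolding q1 q2 by auto
    next
      case equal then show ?thesis using x q1 q2 by simp
    next
      case greater then show ?thesis using key[of x1 y2 y1] q ph x unfolding q1 q2 by auto
    qed
  qed
  define W where "W = F ` U"
  have W: "open W" unfolding W_def by (rule invariance_of_domain[OF contF U(1) injF])
  obtain g where hom: "homeomorphism U W F g"
    using invariance_of_domain_homeomorphism[OF U(1) contF _ injF] unfolding W_def by auto
  have gF: "\<And>q. q \<in> U \<Longrightarrow> g (F q) = q" and Fg: "\<And>w. w \<in> W \<Longrightarrow> F (g w) = w"
    and gU: "\<And>w. w \<in> W \<Longrightarrow> g w \<in> U" and contg: "continuous_on W g"
    using hom unfolding homeomorphism_def by auto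
  have g_fst: "fst (g w) = fst w" and g_phi: "\<phi> (g w) = snd w" if "w \<in> W" for w
    using Fg[OF that] unfolding F_def by (auto simp: prod_eq_iff)
  have gd: "(g has_derivative (\<lambda>k. (fst k, (snd k - A (g w) * fst k) * inverse (B (g w))))) (at w)"
    if "w \<in> W" for w
  proof -
    define q where "q = g w"
    have q: "q \<in> U" "F q = w" using gU Fg that unfolding q_def by auto
    have HF: "(F has_derivative (\<lambda>h. (fst h, fst h * A q + snd h * B q))) (at q)"
      unfolding F_def A_def B_def
      by (intro has_derivative_Pair has_derivative_fst has_derivative_ident has_derivative_pd_real d\<phi> q(1))
    have lin: "linear (\<lambda>k. (fst k, (snd k - A q * fst k) * inverse (B q)))"
      by (rule linearI) (auto simp: algebra_simps)
    then have bl: "bounded_linear (\<lambda>k. (fst k, (snd k - A q * fst k) * inverse (B q)))"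
      using linear_conv_bounded_linear by blast
    have id: "(\<lambda>k. (fst k, (snd k - A q * fst k) * inverse (B q))) \<circ> (\<lambda>h. (fst h, fst h * A q + snd h * B q)) = id"
      using BU[OF q(1)] by (auto simp: fun_eq_iff field_simps)
    have "(g has_derivative (\<lambda>k. (fst k, (snd k - A q * fst k) * inverse (B q)))) (at (F q))"
      by (rule has_derivative_inverse_dieudonne[OF U(1) _ contF _ gF q(1) HF bl id])
         (use W contg in \<open>auto simp: W_def\<close>)
    then show ?thesis using q(2) unfolding q_def by simp
  qed
  define \<psi> where "\<psi> = (\<lambda>w. snd (g w))"
  have sm\<psi>: "\<And>n. sm W n \<psi>" unfolding \<psi>_def
    by (rule comp_sm[OF U(1) W gU gd smU(2) smiB sm_snd])
  have g_eq: "g w = (fst w, \<psi> w)" if "w \<in> W" for w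
    using g_fst[OF that] unfolding \<psi>_def by (simp add: prod_eq_iff)
  have img: "(\<lambda>(x, y). (x, y, \<phi> (x, y))) ` U = (\<lambda>(x, z). (x, \<psi> (x, z), z)) ` W"
  proof (intro equalityI subsetI)
    fix v assume "v \<in> (\<lambda>(x, y). (x, y, \<phi> (x, y))) ` U"
    then obtain x y where xy: "(x, y) \<in> U" "v = (x, y, \<phi> (x, y))" by auto
    have w: "(x, \<phi> (x, y)) \<in> W" using xy(1) unfolding W_def F_def by force
    have "\<psi> (x, \<phi> (x, y)) = y" using gF[OF xy(1)] unfolding \<psi>_def F_def by simp
    then show "v \<in> (\<lambda>(x, z). (x, \<psi> (x, z), z)) ` W" using w xy(2) by force
  next
    fix v assume "v \<in> (\<lambda>(x, z). (x, \<psi> (x, z), z)) ` W"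
    then obtain x z where xz: "(x, z) \<in> W" "v = (x, \<psi> (x, z), z)" by auto
    have "(x, \<psi> (x, z)) \<in> U" using gU[OF xz(1)] g_eq[OF xz(1)] by simp
    moreover have "\<phi> (x, \<psi> (x, z)) = z" using g_phi[OF xz(1)] g_eq[OF xz(1)] by simp
    ultimately show "v \<in> (\<lambda>(x, y). (x, y, \<phi> (x, y))) ` U" using xz(2) by force
  qed
  define P1 where "P1 = (\<lambda>q. - (A q * inverse (B q)))"
  define P2 where "P2 = (\<lambda>q. inverse (B q))"
  have dsnd: "\<And>z. snd differentiable at z"
    by (rule bounded_linear_imp_differentiable[OF bounded_linear_snd])
  have pd\<psi>1: "pd1 \<psi> z = P1 (g z)" if "z \<in> W" for z
    using comp_pd(1)[OF dsnd gd[OF that]] unfolding \<psi>_def P1_def by (simp add: pd_snd)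
  have pd\<psi>2: "pd2 \<psi> z = P2 (g z)" if "z \<in> W" for z
    using comp_pd(2)[OF dsnd gd[OF that]] unfolding \<psi>_def P2_def by (simp add: pd_snd)
  have BI: "born_infeld_on W \<psi>" unfolding born_infeld_on_def
  proof
    fix w assume w: "w \<in> W"
    define q where "q = g w"
    have q: "q \<in> U" "q \<in> \<Omega>" using gU[OF w] U(3) unfolding q_def by auto
    have HA: "(A has_derivative (\<lambda>h. fst h * pd1 A q + snd h * pd2 A q)) (at q)"
      by (rule has_derivative_pd_real[OF dA[OF q(1)]])
    have HB: "(B has_derivative (\<lambda>h. fst h * pd1 B q + snd h * pd2 B q)) (at q)"
      by (rule has_derivative_pd_real[OF dB[OF q(1)]])
    have HP2: "(P2 has_derivative (\<lambda>h. - (inverse (B q) * (fst h * pd1 B q + snd h * pd2 B q) * inverse (B q)))) (at q)"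
      unfolding P2_def by (rule Deriv.has_derivative_inverse[OF BU[OF q(1)] HB])
    have HP1: "(P1 has_derivative (\<lambda>h. - (A q * (- (inverse (B q) * (fst h * pd1 B q + snd h * pd2 B q) * inverse (B q)))
        + (fst h * pd1 A q + snd h * pd2 A q) * inverse (B q)))) (at q)"
      unfolding P1_def by (rule has_derivative_minus[OF has_derivative_mult[OF HA HP2[unfolded P2_def]]])
    have dP1: "P1 differentiable at q" using HP1 differentiable_def by blast
    have dP2: "P2 differentiable at q" using HP2 differentiable_def by blast
    have e1: "pd1 (pd1 \<psi>) w = pd1 P1 q - pd2 P1 q * A q * inverse (B q)"
    proof -
      have "pd1 (pd1 \<psi>) w = pd1 (\<lambda>z. P1 (g z)) w" by (rule pd1_cong[OF W w]) (simp add: pd\<psi>1)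
      also have "\<dots> = pd1 P1 q - pd2 P1 q * A q * inverse (B q)"
        using comp_pd(1)[OF _ gd[OF w]] dP1 unfolding q_def by simp
      finally show ?thesis .
    qed
    have e2: "pd2 (pd1 \<psi>) w = pd2 P1 q * inverse (B q)"
    proof -
      have "pd2 (pd1 \<psi>) w = pd2 (\<lambda>z. P1 (g z)) w" by (rule pd2_cong[OF W w]) (simp add: pd\<psi>1)
      also have "\<dots> = pd2 P1 q * inverse (B q)"
        using comp_pd(2)[OF _ gd[OF w]] dP1 unfolding q_def by simp
      finally show ?thesis .
    qed
    have e3: "pd2 (pd2 \<psi>) w = pd2 P2 q * inverse (B q)"
    proof -
      have "pd2 (pd2 \<psi>) w = pd2 (\<lambda>z. P2 (g z)) w" by (rule pd2_cong[OF W w]) (simp add: pd\<psi>2)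
      also have "\<dots> = pd2 P2 q * inverse (B q)"
        using comp_pd(2)[OF _ gd[OF w]] dP2 unfolding q_def by simp
      finally show ?thesis .
    qed
    have f1: "pd1 P1 q = - (A q * (- (inverse (B q) * pd1 B q * inverse (B q))) + pd1 A q * inverse (B q))"
      using pd_hd(1)[OF HP1] by simp
    have f2: "pd2 P1 q = - (A q * (- (inverse (B q) * pd2 B q * inverse (B q))) + pd2 A q * inverse (B q))"
      using pd_hd(2)[OF HP1] by simp
    have f3: "pd2 P2 q = - (inverse (B q) * pd2 B q * inverse (B q))"
      using pd_hd(2)[OF HP2] by simp
    have sym: "pd2 A q = pd1 B q" unfolding A_def B_def by (rule schwarz[OF op\<Omega> sm\<phi> q(2)])
    have P: "(1 - (A q)\<^sup>2) * pd2 B q + 2 * A q * B q * pd2 A q + (1 - (B q)\<^sup>2) * pd1 A q = 0"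
      using pde[OF q(2)] unfolding A_def B_def .
    have "pd1 \<psi> w = - (A q * inverse (B q))" "pd2 \<psi> w = inverse (B q)"
      using pd\<psi>1[OF w] pd\<psi>2[OF w] unfolding P1_def P2_def q_def by auto
    then show "(1 - (pd2 \<psi> w)\<^sup>2) * pd1 (pd1 \<psi>) w + 2 * pd1 \<psi> w * pd2 \<psi> w * pd2 (pd1 \<psi>) w
      - (1 + (pd1 \<psi> w)\<^sup>2) * pd2 (pd2 \<psi>) w = 0"
      by (intro bi_algebra2[OF BU[OF q(1)] P refl]) (use e1 e2 e3 f1 f2 f3 sym in auto)
  qed
  show ?thesis
    using U(1-3) W sm\<psi> BI img unfolding smooth_on_sm by blast
qed

lemma pd_iter_swap:
  "pd_iter bs (\<lambda>z. f (snd z, fst z)) = (\<lambda>z. pd_iter (map Not bs) f (snd z, fst z))"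
  by (induction bs) (auto simp: pd1_swap pd2_swap)

lemma smooth_swap:
  assumes "open \<Omega>" "smooth_on \<Omega> f"
  shows "smooth_on ((\<lambda>z. (snd z, fst z)) -` \<Omega>) (\<lambda>z. f (snd z, fst z))"
  unfolding smooth_on_def
proof
  fix bs :: "bool list"
  let ?\<Omega>' = "(\<lambda>z::real \<times> real. (snd z, fst z)) -` \<Omega>"
  have op: "open ?\<Omega>'" by (rule continuous_open_vimage[OF assms(1)]) (auto intro!: continuous_intros)
  have D: "pd_iter (map Not bs) f differentiable_on \<Omega>" using assms(2) unfolding smooth_on_def by blast
  have "\<forall>z\<in>?\<Omega>'. (\<lambda>z. pd_iter (map Not bs) f (snd z, fst z)) differentiable at z"
  proof
    fix z assume "z \<in> ?\<Omega>'"
    then have "(snd z, fst z) \<in> \<Omega>" by simp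
    from diff_swap[OF diff_at[OF assms(1) D this]]
    show "(\<lambda>z. pd_iter (map Not bs) f (snd z, fst z)) differentiable at z" .
  qed
  then show "pd_iter bs (\<lambda>z. f (snd z, fst z)) differentiable_on ?\<Omega>'"
    unfolding pd_iter_swap using differentiable_on_eq_differentiable_at[OF op] by blast
qed

theorem lemma2p1:
  fixes \<phi> :: "real \<times> real \<Rightarrow> real" and \<Omega> :: "(real \<times> real) set"
  assumes "open \<Omega>"
    and "smooth_on \<Omega> \<phi>"
    and "timelike_on \<Omega> (\<lambda>(x, y). (x, y, \<phi> (x, y)))"
    and "minimal_on \<Omega> (\<lambda>(x, y). (x, y, \<phi> (x, y)))"
  shows "\<forall>p\<in>\<Omega>. \<exists>U. open U \<and> p \<in> U \<and> U \<subseteq> \<Omega> \<and>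
           (\<exists>W \<psi>. open W \<and> smooth_on W \<psi> \<and> born_infeld_on W \<psi> \<and>
              ((\<lambda>(x, y). (x, y, \<phi> (x, y))) ` U = (\<lambda>(x, z). (x, \<psi> (x, z), z)) ` W
               \<or> (\<lambda>(x, y). (x, y, \<phi> (x, y))) ` U = (\<lambda>(y, z). (\<psi> (y, z), y, z)) ` W))"
proof
  fix p assume p: "p \<in> \<Omega>"
  have sm\<phi>: "\<And>n. sm \<Omega> n \<phi>" using assms(2) smooth_on_sm by blast
  note PF = pde_from_minimal[OF assms(1) sm\<phi> _ assms(3) assms(4)]
  have pde: "\<And>q. q \<in> \<Omega> \<Longrightarrow> (1 - (pd1 \<phi> q)\<^sup>2) * pd2 (pd2 \<phi>) q + 2 * pd1 \<phi> q * pd2 \<phi> q * pd2 (pd1 \<phi>) q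
       + (1 - (pd2 \<phi> q)\<^sup>2) * pd1 (pd1 \<phi>) q = 0" using PF(2) .
  have ab: "(pd1 \<phi> p)\<^sup>2 + (pd2 \<phi> p)\<^sup>2 > 1" using PF(1)[OF p] .
  show "\<exists>U. open U \<and> p \<in> U \<and> U \<subseteq> \<Omega> \<and>
           (\<exists>W \<psi>. open W \<and> smooth_on W \<psi> \<and> born_infeld_on W \<psi> \<and>
              ((\<lambda>(x, y). (x, y, \<phi> (x, y))) ` U = (\<lambda>(x, z). (x, \<psi> (x, z), z)) ` W
               \<or> (\<lambda>(x, y). (x, y, \<phi> (x, y))) ` U = (\<lambda>(y, z). (\<psi> (y, z), y, z)) ` W))"
  proof (cases "pd2 \<phi> p = 0")
    case False
    from main_case[OF assms(1) sm\<phi> pde p False] show ?thesis by blast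
  next
    case True
    then have a0: "pd1 \<phi> p \<noteq> 0" using ab by auto
    define S where "S = (\<lambda>z::real \<times> real. (snd z, fst z))"
    define \<phi>' where "\<phi>' = (\<lambda>z. \<phi> (snd z, fst z))"
    define \<Omega>' where "\<Omega>' = S -` \<Omega>"
    have op': "open \<Omega>'" unfolding \<Omega>'_def S_def
      by (rule continuous_open_vimage[OF assms(1)]) (auto intro!: continuous_intros)
    have sm': "\<And>n. sm \<Omega>' n \<phi>'"
      using smooth_swap[OF assms(1,2)] smooth_on_sm unfolding \<Omega>'_def S_def \<phi>'_def by blast
    have pde': "(1 - (pd1 \<phi>' z)\<^sup>2) * pd2 (pd2 \<phi>') z + 2 * pd1 \<phi>' z * pd2 \<phi>' z * pd2 (pd1 \<phi>') z
       + (1 - (pd2 \<phi>' z)\<^sup>2) * pd1 (pd1 \<phi>') z = 0" if z: "z \<in> \<Omega>'" for z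
    proof -
      define z' where "z' = (snd z, fst z)"
      have z': "z' \<in> \<Omega>" using z unfolding \<Omega>'_def S_def z'_def by simp
      have e: "pd1 \<phi>' z = pd2 \<phi> z'" "pd2 \<phi>' z = pd1 \<phi> z'"
        "pd1 (pd1 \<phi>') z = pd2 (pd2 \<phi>) z'" "pd2 (pd2 \<phi>') z = pd1 (pd1 \<phi>) z'"
        "pd2 (pd1 \<phi>') z = pd1 (pd2 \<phi>) z'"
        unfolding \<phi>'_def z'_def pd1_swap pd2_swap by simp_all
      have "pd2 (pd1 \<phi>) z' = pd1 (pd2 \<phi>) z'" by (rule schwarz[OF assms(1) sm\<phi> z'])
      then show ?thesis unfolding e using pde[OF z'] by (simp add: algebra_simps)
    qed
    have p': "S p \<in> \<Omega>'" using p unfolding \<Omega>'_def S_def by simp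
    have b': "pd2 \<phi>' (S p) \<noteq> 0" using a0 unfolding \<phi>'_def S_def pd2_swap by simp
    obtain U' W \<psi> where U': "open U'" "S p \<in> U'" "U' \<subseteq> \<Omega>'" and W: "open W" "smooth_on W \<psi>" "born_infeld_on W \<psi>"
      and img: "(\<lambda>(x, y). (x, y, \<phi>' (x, y))) ` U' = (\<lambda>(x, z). (x, \<psi> (x, z), z)) ` W"
      using main_case[OF op' sm' pde' p' b'] by blast
    define U where "U = S -` U'"
    have U: "open U" "p \<in> U" "U \<subseteq> \<Omega>"
    proof -
      show "open U" unfolding U_def S_def
        by (rule continuous_open_vimage[OF U'(1)]) (auto intro!: continuous_intros)
      show "p \<in> U" using U'(2) unfolding U_def by simp
      show "U \<subseteq> \<Omega>" using U'(3) unfolding U_def \<Omega>'_def S_def by auto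
    qed
    have "(\<lambda>(x, y). (x, y, \<phi> (x, y))) ` U = (\<lambda>(y, z). (\<psi> (y, z), y, z)) ` W"
    proof (intro equalityI subsetI)
      fix v assume "v \<in> (\<lambda>(x, y). (x, y, \<phi> (x, y))) ` U"
      then obtain x y where xy: "(x, y) \<in> U" "v = (x, y, \<phi> (x, y))" by auto
      have "(y, x) \<in> U'" using xy(1) unfolding U_def S_def by simp
      then have "(y, x, \<phi>' (y, x)) \<in> (\<lambda>(x, z). (x, \<psi> (x, z), z)) ` W" using img by force
      then obtain a c where ac: "(a, c) \<in> W" "(y, x, \<phi>' (y, x)) = (a, \<psi> (a, c), c)" by auto
      have "v = (\<psi> (y, c), y, c)" using ac(2) xy(2) unfolding \<phi>'_def by auto
      then show "v \<in> (\<lambda>(y, z). (\<psi> (y, z), y, z)) ` W" using ac by force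
    next
      fix v assume "v \<in> (\<lambda>(y, z). (\<psi> (y, z), y, z)) ` W"
      then obtain y c where yc: "(y, c) \<in> W" "v = (\<psi> (y, c), y, c)" by auto
      have "(y, \<psi> (y, c), c) \<in> (\<lambda>(x, y). (x, y, \<phi>' (x, y))) ` U'" using img yc(1) by force
      then obtain w where w: "w \<in> U'" "(y, \<psi> (y, c), c) = (\<lambda>(x, y). (x, y, \<phi>' (x, y))) w" by blast
      obtain a b where wab: "w = (a, b)" by (cases w)
      have ab1: "(a, b) \<in> U'" using w(1) unfolding wab .
      have eqv: "(y, \<psi> (y, c), c) = (a, b, \<phi>' (a, b))" using w(2) unfolding wab by (simp only: prod.case)
      have e0: "y = a \<and> \<psi> (y, c) = b \<and> c = \<phi>' (a, b)" using eqv[unfolded prod.inject] .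
      have e: "y = a" "\<psi> (y, c) = b" "c = \<phi>' (a, b)" using e0 by blast+
      have "(b, a) \<in> U" using ab1 unfolding U_def S_def by simp
      moreover have "v = (b, a, \<phi> (b, a))" unfolding yc(2) e(2) using e(1,3) unfolding \<phi>'_def by simp
      ultimately show "v \<in> (\<lambda>(x, y). (x, y, \<phi> (x, y))) ` U" by force
    qed
    then show ?thesis using U W by blast
  qed
qed

end
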